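(* For all $w_1\in\mathcal{H}^0$ and $w_2\in\mathcal{H}^{\ge2}$, $Z^\diamondsuit(w_1*w_2)=Z^\diamondsuit(w_1)Z^\diamondsuit(w_2)$ (termwise product in $\mathbb{Q}^{\mathbb{N}}$).
   Context: $[n]=\{1,\dots,n\}$. For $N\ge1$ and an admissible index (tuple of positive integers, nonempty, last entry $\ge2$) $\boldsymbol{k}=(k_1,\dots,k_r)$: $[r]^1_{\boldsymbol{k}}=\{i:k_i=1\}$, $S_{r,N}(A)=\{(n_1,\dots,n_r)\in[N-1]^r: n_i\le n_{i+1}\ (i\in A),\ n_i<n_{i+1}\ (i\in[r-1]\setminus A)\}$, $\zeta^\diamondsuit_N(\boldsymbol{k})=\sum_{A\subset[r]^1_{\boldsymbol{k}}}\sum_{S_{r,N}(A)}\prod_{i\in A}(N-n_i)^{-1}\prod_{i\notin A}n_i^{-k_i}$, $\zeta^\diamondsuit(\boldsymbol{k})=(\zeta^\diamondsuit_N(\boldsymbol{k}))_{N\ge1}$. $\mathcal{H}=\mathbb{Q}\langle x,y\rangle$, $\mathcal{H}^1=\mathbb{Q}+y\mathcal{H}$, $\mathcal{H}^0=\mathbb{Q}+y\mathcal{H}x$, $\mathcal{H}^{\ge2}=\mathbb{Q}+yx\,\mathbb{Q}\langle x,yx\rangle$, $e_k=yx^{k-1}$; $Z^\diamondsuit\colon\mathcal{H}^0\to\mathbb{Q}^{\mathbb{N}}$ is $\mathbb{Q}$-linear with $Z^\diamondsuit(1)=(1)_N$, $Z^\diamondsuit(e_{k_1}\cdots e_{k_r})=\zeta^\diamondsuit(k_1,\dots,k_r)$.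 Harmonic product $*$ on $\mathcal{H}^1$: $\mathbb{Q}$-bilinear, $w*1=1*w=w$, $w_1e_{k_1}*w_2e_{k_2}=(w_1*w_2e_{k_2})e_{k_1}+(w_1e_{k_1}*w_2)e_{k_2}+(w_1*w_2)e_{k_1+k_2}$ for words $w_1,w_2$. *)

theory Defs
  imports Complex_Main "HOL-Library.FuncSet"
begin

datatype letter = X | Y

type_synonym hword = "letter list"
type_synonym helem = "hword \<Rightarrow> rat"   \<comment> \<open>coefficient function of a noncommutative polynomial\<close>

definition supp :: "helem \<Rightarrow> hword set" where
  "supp f = {w. f w \<noteq> 0}"

definition Hset :: "helem set" where
  "Hset = {f. finite (supp f)}"

definition H1 :: "helem set" where
  "H1 = {f \<in> Hset. \<forall>w \<in> supp f. w = [] \<or> (\<exists>u. w = Y # u)}"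

definition H0 :: "helem set" where
  "H0 = {f \<in> Hset. \<forall>w \<in> supp f. w = [] \<or> (\<exists>u. w = Y # u @ [X])}"

text \<open>H^{>=2} = Q + yx Q<x,yx>: words are empty or yx followed by a word in the letters x and yx.\<close>
definition H2 :: "helem set" where
  "H2 = {f \<in> Hset. \<forall>w \<in> supp f. w = [] \<or>
          (\<exists>us. (\<forall>u \<in> set us. u = [X] \<or> u = [Y, X]) \<and> w = [Y, X] @ concat us)}"

definition ek :: "nat \<Rightarrow> hword" where
  "ek k = Y # replicate (k - 1) X"

definition idx_word :: "nat list \<Rightarrow> hword" where
  "idx_word ks = concat (map ek ks)"

definition widx :: "hword \<Rightarrow> nat list" where
  "widx w = (THE ks. (\<forall>k \<in> set ks. 0 < k) \<and> idx_word ks = w)"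

definition delta :: "hword \<Rightarrow> helem" where
  "delta w = (\<lambda>v. if v = w then 1 else 0)"

definition rmul :: "helem \<Rightarrow> hword \<Rightarrow> helem" where
  "rmul f u = (\<lambda>w. if (\<exists>v. w = v @ u) then f (take (length w - length u) w) else 0)"

text \<open>Harmonic product of two words e_{..}, given by their reversed indices
  (so that the head of the list is the last letter e_k).\<close>
fun hrev :: "nat list \<Rightarrow> nat list \<Rightarrow> helem" where
  "hrev [] b = delta (idx_word (rev b))"
| "hrev (k1 # a) [] = delta (idx_word (rev (k1 # a)))"
| "hrev (k1 # a) (k2 # b) =
     (\<lambda>w. rmul (hrev a (k2 # b)) (ek k1) w + rmul (hrev (k1 # a) b) (ek k2) w
          + rmul (hrev a b) (ek (k1 + k2)) w)"

definition harm :: "helem \<Rightarrow> helem \<Rightarrow> helem" where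
  "harm f g = (\<lambda>w. \<Sum>u \<in> supp f. \<Sum>v \<in> supp g.
      f u * g v * hrev (rev (widx u)) (rev (widx v)) w)"

text \<open>Index k = (k_1,...,k_r) is a list, k_i = ks ! (i-1); tuples (n_1,...,n_r) are
  extensional functions on {1..r}.\<close>
definition Sset :: "nat \<Rightarrow> nat \<Rightarrow> nat set \<Rightarrow> (nat \<Rightarrow> nat) set" where
  "Sset r N A = {n \<in> {1..r} \<rightarrow>\<^sub>E {1..N-1}.
      \<forall>i \<in> {1..r-1}. (i \<in> A \<longrightarrow> n i \<le> n (Suc i)) \<and> (i \<notin> A \<longrightarrow> n i < n (Suc i))}"

definition zetaD_N :: "nat list \<Rightarrow> nat \<Rightarrow> rat" where
  "zetaD_N ks N = (let r = length ks; k = (\<lambda>i. ks ! (i - 1)) in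
     \<Sum>A \<in> Pow {i \<in> {1..r}. k i = 1}. \<Sum>n \<in> Sset r N A.
        (\<Prod>i \<in> A. 1 / of_nat (N - n i)) * (\<Prod>i \<in> {1..r} - A. 1 / of_nat (n i) ^ k i))"

definition zetaD :: "nat list \<Rightarrow> (nat \<Rightarrow> rat)" where
  "zetaD ks = (\<lambda>N. zetaD_N ks N)"

definition Zword :: "hword \<Rightarrow> (nat \<Rightarrow> rat)" where
  "Zword w = (if w = [] then (\<lambda>N. 1) else zetaD (widx w))"

definition ZD :: "helem \<Rightarrow> (nat \<Rightarrow> rat)" where
  "ZD f = (\<lambda>N. \<Sum>w \<in> supp f. f w * Zword w N)"

end

theory Submission
  imports Defs
begin


definition Dlin :: "nat \<Rightarrow> nat \<Rightarrow> (nat \<Rightarrow> rat) \<Rightarrow> nat \<Rightarrow> rat" where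
  "Dlin N k f m = (\<Sum>n\<in>{1..<m}. 1 / of_nat n ^ k * f n)
     + (if k = 1 then (\<Sum>n\<in>{1..min m (N-1)}. 1 / of_nat (N - n) * f n) else 0)"

fun D :: "nat \<Rightarrow> nat list \<Rightarrow> nat \<Rightarrow> rat" where
  "D N [] m = 1"
| "D N (k # c) m = Dlin N k (D N c) m"

lemma Dlin_0: "Dlin N k f 0 = 0"
  by (simp add: Dlin_def)

lemma Dlin_Suc: "Dlin N k f (Suc m) = Dlin N k f m + (if 1 \<le> m then 1 / of_nat m ^ k * f m else 0)
   + (if k = 1 \<and> Suc m \<le> N - 1 then 1 / of_nat (N - Suc m) * f (Suc m) else 0)"
proof -
  have 1: "(\<Sum>n\<in>{1..<Suc m}. 1 / of_nat n ^ k * f n) = (\<Sum>n\<in>{1..<m}. 1 / of_nat n ^ k * f n) + (if 1 \<le> m then 1 / of_nat m ^ k * f m else 0)"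
    by (cases m) (auto simp: sum.atLeastLessThan_Suc)
  have 2: "(\<Sum>n\<in>{1..min (Suc m) (N-1)}. 1 / of_nat (N - n) * f n) = (\<Sum>n\<in>{1..min m (N-1)}. 1 / of_nat (N - n) * f n)
      + (if Suc m \<le> N - 1 then 1 / of_nat (N - Suc m) * f (Suc m) else 0)"
  proof (cases "Suc m \<le> N - 1")
    case True
    then have "min (Suc m) (N-1) = Suc m" "min m (N-1) = m" by auto
    then show ?thesis using True by simp
  next
    case False
    then have "min (Suc m) (N-1) = min m (N-1)" by auto
    then show ?thesis using False by simp
  qed
  show ?thesis unfolding Dlin_def using 1 2 by auto
qed

lemma Dlin_add: "Dlin N k (\<lambda>n. f n + g n) m = Dlin N k f m + Dlin N k g m"
  by (simp add: Dlin_def sum.distrib distrib_left)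

lemma Dlin_zero: "Dlin N k (\<lambda>n. 0) m = 0"
  by (simp add: Dlin_def)

lemma Dlin_sum_list: "sum_list (map (\<lambda>c. Dlin N k (g c) m) cs) = Dlin N k (\<lambda>n. sum_list (map (\<lambda>c. g c n) cs)) m"
  by (induction cs) (simp_all add: Dlin_zero Dlin_add)

lemma prod_Dlin:
  assumes "k2 \<noteq> 1" "k1 + k2 \<noteq> 1"
  shows "Dlin N k1 (\<lambda>n. f n * Dlin N k2 g n) m + Dlin N k2 (\<lambda>n. Dlin N k1 f n * g n) m
     + Dlin N (k1+k2) (\<lambda>n. f n * g n) m = Dlin N k1 f m * Dlin N k2 g m"
proof (induction m)
  case 0
  then show ?case by (simp add: Dlin_0)
next
  case (Suc m)
  let ?a = "Dlin N k1 f" and ?b = "Dlin N k2 g"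
  let ?c = "\<lambda>n. if 1 \<le> n then 1 / of_nat n ^ k1 * f n else 0"
  let ?d = "\<lambda>n. if 1 \<le> n then 1 / of_nat n ^ k2 * g n else 0"
  let ?e = "if k1 = 1 \<and> Suc m \<le> N - 1 then 1 / of_nat (N - Suc m) * f (Suc m) else 0"
  have s1: "?a (Suc m) = ?a m + ?c m + ?e" by (simp add: Dlin_Suc)
  have s2: "?b (Suc m) = ?b m + ?d m" using assms by (simp add: Dlin_Suc)
  have s3: "Dlin N k1 (\<lambda>n. f n * ?b n) (Suc m) = Dlin N k1 (\<lambda>n. f n * ?b n) m + ?c m * ?b m + ?e * ?b (Suc m)"
    by (simp add: Dlin_Suc)
  have s4: "Dlin N k2 (\<lambda>n. ?a n * g n) (Suc m) = Dlin N k2 (\<lambda>n. ?a n * g n) m + ?a m * ?d m"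
    using assms by (simp add: Dlin_Suc)
  have s5: "Dlin N (k1+k2) (\<lambda>n. f n * g n) (Suc m) = Dlin N (k1+k2) (\<lambda>n. f n * g n) m + ?c m * ?d m"
    using assms by (simp add: Dlin_Suc power_add)
  show ?case unfolding s1 s2 s3 s4 s5 using Suc.IH
    by (cases "1 \<le> m"; simp add: algebra_simps)
qed

fun hl :: "nat list \<Rightarrow> nat list \<Rightarrow> nat list list" where
  "hl [] b = [b]"
| "hl (k1 # a) [] = [k1 # a]"
| "hl (k1 # a) (k2 # b) = map (Cons k1) (hl a (k2 # b)) @ map (Cons k2) (hl (k1 # a) b)
     @ map (Cons (k1 + k2)) (hl a b)"

lemma core:
  assumes "\<forall>x\<in>set b. 2 \<le> x"
  shows "sum_list (map (\<lambda>c. D N c m) (hl a b)) = D N a m * D N b m"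
  using assms
proof (induction a b arbitrary: m rule: hl.induct)
  case (1 b)
  then show ?case by simp
next
  case (2 k1 a)
  then show ?case by simp
next
  case (3 k1 a k2 b)
  have e1: "sum_list (map (\<lambda>c. D N c m) (map (Cons k1) (hl a (k2 # b))))
      = Dlin N k1 (\<lambda>n. D N a n * D N (k2 # b) n) m"
    using 3 by (simp add: o_def Dlin_sum_list)
  have e2: "sum_list (map (\<lambda>c. D N c m) (map (Cons k2) (hl (k1 # a) b)))
      = Dlin N k2 (\<lambda>n. D N (k1 # a) n * D N b n) m"
    using 3 by (simp add: o_def Dlin_sum_list)
  have e3: "sum_list (map (\<lambda>c. D N c m) (map (Cons (k1 + k2)) (hl a b)))
      = Dlin N (k1 + k2) (\<lambda>n. D N a n * D N b n) m"
    using 3 by (simp add: o_def Dlin_sum_list)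
  have "k2 \<noteq> 1" "k1 + k2 \<noteq> 1" using 3(4) by auto
  from prod_Dlin[OF this, of N "D N a" "D N b" m]
  show ?case using e1 e2 e3 by simp
qed



definition wt :: "nat \<Rightarrow> nat list \<Rightarrow> nat set \<Rightarrow> (nat \<Rightarrow> nat) \<Rightarrow> rat" where
  "wt N ks A n = (\<Prod>i\<in>A. 1 / of_nat (N - n i)) * (\<Prod>i\<in>{1..length ks} - A. 1 / of_nat (n i) ^ (ks ! (i - 1)))"

definition Sb :: "nat \<Rightarrow> nat \<Rightarrow> nat \<Rightarrow> nat set \<Rightarrow> (nat \<Rightarrow> nat) set" where
  "Sb N r m A = {n \<in> Sset r N A. 0 < r \<longrightarrow> (r \<in> A \<longrightarrow> n r \<le> m) \<and> (r \<notin> A \<longrightarrow> n r < m)}"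

definition Gs :: "nat \<Rightarrow> nat list \<Rightarrow> nat \<Rightarrow> rat" where
  "Gs N ks m = (\<Sum>A\<in>Pow {i \<in> {1..length ks}. ks ! (i - 1) = 1}. \<Sum>n\<in>Sb N (length ks) m A. wt N ks A n)"

lemma finite_Sb: "finite (Sb N r m A)"
proof -
  have "Sb N r m A \<subseteq> {1..r} \<rightarrow>\<^sub>E {1..N-1}" by (auto simp: Sb_def Sset_def)
  then show ?thesis by (rule finite_subset) (simp add: finite_PiE)
qed

lemma ext_img:
  fixes N r m :: nat
  assumes A: "A \<subseteq> {1..r}" and B: "B - {Suc r} = A" "B \<subseteq> {1..Suc r}"
  defines "J \<equiv> {j\<in>{1..N-1}. (Suc r \<in> B \<longrightarrow> j \<le> m) \<and> (Suc r \<notin> B \<longrightarrow> j < m)}"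
  shows "(\<lambda>(j,f). f(Suc r := j)) ` (SIGMA j:J. Sb N r j A) = Sb N (Suc r) m B"
proof (intro equalityI subsetI)
  have iff: "\<And>i. i \<le> r \<Longrightarrow> (i \<in> B) = (i \<in> A)" using B by auto
  fix x assume "x \<in> (\<lambda>(j,f). f(Suc r := j)) ` (SIGMA j:J. Sb N r j A)"
  then obtain j f where x: "x = f(Suc r := j)" and j: "j \<in> J" and f: "f \<in> Sb N r j A" by auto
  have fP: "f \<in> {1..r} \<rightarrow>\<^sub>E {1..N-1}" and
    fC: "\<forall>i\<in>{1..r-1}. (i \<in> A \<longrightarrow> f i \<le> f (Suc i)) \<and> (i \<notin> A \<longrightarrow> f i < f (Suc i))" and
    fL: "0 < r \<longrightarrow> (r \<in> A \<longrightarrow> f r \<le> j) \<and> (r \<notin> A \<longrightarrow> f r < j)"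
    using f by (auto simp: Sb_def Sset_def)
  have "x \<in> {1..Suc r} \<rightarrow>\<^sub>E {1..N-1}" using fP j unfolding x J_def by (auto simp: PiE_iff extensional_def)
  moreover have "\<forall>i\<in>{1..Suc r-1}. (i \<in> B \<longrightarrow> x i \<le> x (Suc i)) \<and> (i \<notin> B \<longrightarrow> x i < x (Suc i))"
  proof
    fix i assume i: "i \<in> {1..Suc r - 1}"
    show "(i \<in> B \<longrightarrow> x i \<le> x (Suc i)) \<and> (i \<notin> B \<longrightarrow> x i < x (Suc i))"
    proof (cases "i = r")
      case True
      then show ?thesis using fL i iff[of r] unfolding x by auto
    next
      case False
      then show ?thesis using fC i iff[of i] unfolding x by auto
    qed
  qed
  moreover have "(Suc r \<in> B \<longrightarrow> x (Suc r) \<le> m) \<and> (Suc r \<notin> B \<longrightarrow> x (Suc r) < m)"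
    using j unfolding x J_def by auto
  ultimately show "x \<in> Sb N (Suc r) m B" by (simp add: Sb_def Sset_def)
next
  have iff: "\<And>i. i \<le> r \<Longrightarrow> (i \<in> B) = (i \<in> A)" using B by auto
  fix x assume x: "x \<in> Sb N (Suc r) m B"
  have xP: "x \<in> {1..Suc r} \<rightarrow>\<^sub>E {1..N-1}" and
    xC: "\<forall>i\<in>{1..r}. (i \<in> B \<longrightarrow> x i \<le> x (Suc i)) \<and> (i \<notin> B \<longrightarrow> x i < x (Suc i))" and
    xL: "(Suc r \<in> B \<longrightarrow> x (Suc r) \<le> m) \<and> (Suc r \<notin> B \<longrightarrow> x (Suc r) < m)"
    using x by (auto simp: Sb_def Sset_def)
  define f where "f = x(Suc r := undefined)"
  define j where "j = x (Suc r)"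
  have 1: "x = f(Suc r := j)" by (simp add: f_def j_def)
  have 2: "j \<in> J" using xP xL unfolding J_def j_def by (auto simp: PiE_iff)
  have "f \<in> {1..r} \<rightarrow>\<^sub>E {1..N-1}" using xP unfolding f_def by (auto simp: PiE_iff extensional_def)
  moreover have "\<forall>i\<in>{1..r-1}. (i \<in> A \<longrightarrow> f i \<le> f (Suc i)) \<and> (i \<notin> A \<longrightarrow> f i < f (Suc i))"
    using xC iff unfolding f_def by auto
  moreover have "0 < r \<longrightarrow> (r \<in> A \<longrightarrow> f r \<le> j) \<and> (r \<notin> A \<longrightarrow> f r < j)"
    using xC iff[of r] unfolding f_def j_def by auto
  ultimately have 3: "f \<in> Sb N r j A" by (simp add: Sb_def Sset_def)
  show "x \<in> (\<lambda>(j,f). f(Suc r := j)) ` (SIGMA j:J. Sb N r j A)"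
    using 1 2 3 by force
qed

lemma ext_inj: "inj_on (\<lambda>(j,f). f(Suc r := j)) (SIGMA j:J. Sb N r j A)"
proof (rule inj_onI, clarsimp)
  fix j f j' f'
  assume f: "f \<in> Sb N r j A" and f': "f' \<in> Sb N r j' A" and e: "f(Suc r := j) = f'(Suc r := j')"
  have "j = j'" using fun_cong[OF e, of "Suc r"] by simp
  moreover have "f = f'"
  proof
    fix y
    show "f y = f' y"
    proof (cases "y = Suc r")
      case True
      have "f \<in> {1..r} \<rightarrow>\<^sub>E {1..N-1}" "f' \<in> {1..r} \<rightarrow>\<^sub>E {1..N-1}"
        using f f' by (auto simp: Sb_def Sset_def)
      then show ?thesis using True by (auto simp: PiE_def extensional_def)
    next
      case False
      then show ?thesis using fun_cong[OF e, of y] by simp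
    qed
  qed
  ultimately show "j = j' \<and> f = f'" by simp
qed

lemma ext_sum:
  assumes A: "A \<subseteq> {1..r}" and B: "B - {Suc r} = A" "B \<subseteq> {1..Suc r}"
  shows "(\<Sum>n\<in>Sb N (Suc r) m B. F n) =
    (\<Sum>j\<in>{j\<in>{1..N-1}. (Suc r \<in> B \<longrightarrow> j \<le> m) \<and> (Suc r \<notin> B \<longrightarrow> j < m)}. \<Sum>f\<in>Sb N r j A. F (f(Suc r := j)))"
  (is "_ = (\<Sum>j\<in>?J. _)")
proof -
  have "(\<Sum>n\<in>Sb N (Suc r) m B. F n) = (\<Sum>n\<in>(\<lambda>(j,f). f(Suc r := j)) ` (SIGMA j:?J. Sb N r j A). F n)"
    using ext_img[OF assms] by simp
  also have "\<dots> = (\<Sum>p\<in>(SIGMA j:?J. Sb N r j A). F ((\<lambda>(j,f). f(Suc r := j)) p))"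
    by (rule sum.reindex[OF ext_inj, unfolded o_def])
  also have "\<dots> = (\<Sum>(j,f)\<in>(SIGMA j:?J. Sb N r j A). F (f(Suc r := j)))"
    by (rule sum.cong) auto
  also have "\<dots> = (\<Sum>j\<in>?J. \<Sum>f\<in>Sb N r j A. F (f(Suc r := j)))"
    by (rule sum.Sigma[symmetric]) (auto simp: finite_Sb)
  finally show ?thesis .
qed



lemma wt_ext_notin:
  assumes "A \<subseteq> {1..length ks}"
  shows "wt N (ks@[k]) A (f(Suc (length ks) := j)) = 1 / of_nat j ^ k * wt N ks A f"
proof -
  let ?r = "length ks"
  have p1: "(\<Prod>i\<in>A. 1 / rat_of_nat (N - (f(Suc ?r := j)) i)) = (\<Prod>i\<in>A. 1 / of_nat (N - f i))"
    by (rule prod.cong) (use assms in auto)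
  have s: "{1..length (ks@[k])} - A = insert (Suc ?r) ({1..?r} - A)" using assms by auto
  have p2: "(\<Prod>i\<in>{1..length (ks@[k])} - A. 1 / rat_of_nat ((f(Suc ?r := j)) i) ^ ((ks@[k]) ! (i - 1)))
     = 1 / of_nat j ^ k * (\<Prod>i\<in>{1..?r} - A. 1 / of_nat (f i) ^ (ks ! (i - 1)))"
  proof -
    have "(\<Prod>i\<in>{1..?r} - A. 1 / rat_of_nat ((f(Suc ?r := j)) i) ^ ((ks@[k]) ! (i - 1)))
        = (\<Prod>i\<in>{1..?r} - A. 1 / of_nat (f i) ^ (ks ! (i - 1)))"
      by (rule prod.cong) (auto simp: nth_append)
    then show ?thesis unfolding s by (subst prod.insert) auto
  qed
  show ?thesis unfolding wt_def p1 p2 by simp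
qed

lemma wt_ext_in:
  assumes "A \<subseteq> {1..length ks}"
  shows "wt N (ks@[k]) (insert (Suc (length ks)) A) (f(Suc (length ks) := j)) = 1 / of_nat (N - j) * wt N ks A f"
proof -
  let ?r = "length ks"
  have nin: "Suc ?r \<notin> A" using assms by auto
  have p1: "(\<Prod>i\<in>insert (Suc ?r) A. 1 / rat_of_nat (N - (f(Suc ?r := j)) i)) = 1 / of_nat (N - j) * (\<Prod>i\<in>A. 1 / of_nat (N - f i))"
  proof -
    have "(\<Prod>i\<in>A. 1 / rat_of_nat (N - (f(Suc ?r := j)) i)) = (\<Prod>i\<in>A. 1 / of_nat (N - f i))"
      by (rule prod.cong) (use assms in auto)
    moreover have "finite A" using assms finite_subset by blast
    ultimately show ?thesis using nin by (subst prod.insert) auto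
  qed
  have s: "{1..length (ks@[k])} - insert (Suc ?r) A = {1..?r} - A" by auto
  have p2: "(\<Prod>i\<in>{1..length (ks@[k])} - insert (Suc ?r) A. 1 / rat_of_nat ((f(Suc ?r := j)) i) ^ ((ks@[k]) ! (i - 1)))
     = (\<Prod>i\<in>{1..?r} - A. 1 / of_nat (f i) ^ (ks ! (i - 1)))"
    unfolding s by (rule prod.cong) (auto simp: nth_append)
  show ?thesis unfolding wt_def p1 p2 by simp
qed

lemma Dlin_cong: "(\<And>j. j \<le> N \<Longrightarrow> f j = g j) \<Longrightarrow> m \<le> N \<Longrightarrow> Dlin N k f m = Dlin N k g m"
  unfolding Dlin_def by (auto intro!: sum.cong arg_cong2[where f="(+)"])

lemma Gs_snoc:
  assumes m: "m \<le> N"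
  shows "Gs N (ks@[k]) m = Dlin N k (Gs N ks) m"
proof -
  let ?r = "length ks"
  define I where "I = {i \<in> {1..?r}. ks ! (i - 1) = 1}"
  define GA where "GA A j = (\<Sum>f\<in>Sb N ?r j A. wt N ks A f)" for A j
  have GsI: "Gs N ks j = (\<Sum>A\<in>Pow I. GA A j)" for j unfolding Gs_def GA_def I_def by simp
  have finI: "finite I" unfolding I_def by auto
  have X1: "(\<Sum>n\<in>Sb N (Suc ?r) m A. wt N (ks@[k]) A n) = (\<Sum>j\<in>{1..<m}. 1 / of_nat j ^ k * GA A j)"
    if "A \<in> Pow I" for A
  proof -
    have A: "A \<subseteq> {1..?r}" using that I_def by auto
    have J: "{j\<in>{1..N-1}. (Suc ?r \<in> A \<longrightarrow> j \<le> m) \<and> (Suc ?r \<notin> A \<longrightarrow> j < m)} = {1..<m}"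
      using A m by auto
    have A2: "A - {Suc ?r} = A" "A \<subseteq> {1..Suc ?r}" using A by auto
    show ?thesis unfolding ext_sum[OF A A2] J
      by (rule sum.cong) (use A in \<open>auto simp: GA_def sum_distrib_left wt_ext_notin\<close>)
  qed
  have X2: "(\<Sum>n\<in>Sb N (Suc ?r) m (insert (Suc ?r) A). wt N (ks@[k]) (insert (Suc ?r) A) n)
      = (\<Sum>j\<in>{1..min m (N-1)}. 1 / of_nat (N - j) * GA A j)"
    if "A \<in> Pow I" for A
  proof -
    have A: "A \<subseteq> {1..?r}" using that I_def by auto
    have J: "{j\<in>{1..N-1}. (Suc ?r \<in> insert (Suc ?r) A \<longrightarrow> j \<le> m) \<and> (Suc ?r \<notin> insert (Suc ?r) A \<longrightarrow> j < m)} = {1..min m (N-1)}"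
      by auto
    have B: "insert (Suc ?r) A - {Suc ?r} = A" "insert (Suc ?r) A \<subseteq> {1..Suc ?r}" using A by auto
    show ?thesis unfolding ext_sum[OF A B] J
      by (rule sum.cong) (use A in \<open>auto simp: GA_def sum_distrib_left wt_ext_in\<close>)
  qed
  have Ipr: "{i \<in> {1..length (ks@[k])}. (ks@[k]) ! (i - 1) = 1} = I \<union> (if k = 1 then {Suc ?r} else {})"
    unfolding I_def by (auto simp: nth_append)
  have S1: "(\<Sum>A\<in>Pow I. \<Sum>j\<in>{1..<m}. 1 / of_nat j ^ k * GA A j) = (\<Sum>j\<in>{1..<m}. 1 / of_nat j ^ k * Gs N ks j)"
    unfolding GsI sum_distrib_left by (rule sum.swap)
  have S2: "(\<Sum>A\<in>Pow I. \<Sum>j\<in>{1..min m (N-1)}. 1 / of_nat (N - j) * GA A j) = (\<Sum>j\<in>{1..min m (N-1)}. 1 / of_nat (N - j) * Gs N ks j)"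
    unfolding GsI sum_distrib_left by (rule sum.swap)
  show ?thesis
  proof (cases "k = 1")
    case False
    have "Gs N (ks@[k]) m = (\<Sum>A\<in>Pow I. \<Sum>n\<in>Sb N (Suc ?r) m A. wt N (ks@[k]) A n)"
      unfolding Gs_def using Ipr False by simp
    also have "\<dots> = (\<Sum>A\<in>Pow I. \<Sum>j\<in>{1..<m}. 1 / of_nat j ^ k * GA A j)"
      by (rule sum.cong) (auto simp: X1)
    finally show ?thesis using S1 False by (simp add: Dlin_def)
  next
    case True
    have nI: "Suc ?r \<notin> I" unfolding I_def by auto
    have P: "Pow (I \<union> {Suc ?r}) = Pow I \<union> insert (Suc ?r) ` Pow I" by (simp add: Pow_insert)
    have disj: "Pow I \<inter> insert (Suc ?r) ` Pow I = {}" using nI by auto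
    have inj: "inj_on (insert (Suc ?r)) (Pow I)"
      by (rule inj_onI) (metis PowD insert_ident nI subsetD)
    have "Gs N (ks@[k]) m = (\<Sum>A\<in>Pow I \<union> insert (Suc ?r) ` Pow I. \<Sum>n\<in>Sb N (Suc ?r) m A. wt N (ks@[k]) A n)"
      unfolding Gs_def using Ipr True P by simp
    also have "\<dots> = (\<Sum>A\<in>Pow I. \<Sum>n\<in>Sb N (Suc ?r) m A. wt N (ks@[k]) A n)
        + (\<Sum>A\<in>insert (Suc ?r) ` Pow I. \<Sum>n\<in>Sb N (Suc ?r) m A. wt N (ks@[k]) A n)"
      by (rule sum.union_disjoint) (use finI disj in auto)
    also have "(\<Sum>A\<in>insert (Suc ?r) ` Pow I. \<Sum>n\<in>Sb N (Suc ?r) m A. wt N (ks@[k]) A n)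
        = (\<Sum>A\<in>Pow I. \<Sum>n\<in>Sb N (Suc ?r) m (insert (Suc ?r) A). wt N (ks@[k]) (insert (Suc ?r) A) n)"
      by (subst sum.reindex[OF inj]) simp
    also have "\<dots> = (\<Sum>A\<in>Pow I. \<Sum>j\<in>{1..min m (N-1)}. 1 / of_nat (N - j) * GA A j)"
      by (rule sum.cong) (auto simp: X2)
    also have "(\<Sum>A\<in>Pow I. \<Sum>n\<in>Sb N (Suc ?r) m A. wt N (ks@[k]) A n) = (\<Sum>A\<in>Pow I. \<Sum>j\<in>{1..<m}. 1 / of_nat j ^ k * GA A j)"
      by (rule sum.cong) (auto simp: X1)
    finally show ?thesis using S1 S2 True by (simp add: Dlin_def)
  qed
qed

lemma Sb_nil: "Sb N 0 m {} = {\<lambda>_. undefined}"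
  unfolding Sb_def Sset_def by simp

lemma Gs_nil: "Gs N [] m = 1"
  unfolding Gs_def by (simp add: Sb_nil wt_def)

lemma Gs_D: "m \<le> N \<Longrightarrow> Gs N ks m = D N (rev ks) m"
proof (induction ks arbitrary: m rule: rev_induct)
  case Nil
  then show ?case by (simp add: Gs_nil)
next
  case (snoc k ks)
  have "Gs N (ks @ [k]) m = Dlin N k (Gs N ks) m" using snoc.prems by (rule Gs_snoc)
  also have "\<dots> = Dlin N k (D N (rev ks)) m"
    by (rule Dlin_cong) (use snoc in auto)
  finally show ?case by simp
qed

lemma zetaD_Gs: "zetaD_N ks N = Gs N ks N"
proof -
  have lt: "n r < N" if "n \<in> Sset r N A" "0 < r" for n r A
  proof -
    have "n \<in> {1..r} \<rightarrow>\<^sub>E {1..N-1}" using that by (simp add: Sset_def)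
    moreover have "r \<in> {1..r}" using that by simp
    ultimately have "n r \<in> {1..N-1}" by (rule PiE_mem)
    then show ?thesis by auto
  qed
  have e: "Sb N (length ks) N A = Sset (length ks) N A" for A
    unfolding Sb_def using lt by fastforce
  show ?thesis unfolding zetaD_N_def Gs_def wt_def Let_def e ..
qed

lemma zetaD_D: "zetaD_N ks N = D N (rev ks) N"
  by (simp add: zetaD_Gs Gs_D)



lemma idx_word_Nil[simp]: "idx_word [] = []" by (simp add: idx_word_def)
lemma idx_word_Cons[simp]: "idx_word (k # ks) = ek k @ idx_word ks" by (simp add: idx_word_def)
lemma idx_word_append[simp]: "idx_word (xs @ ys) = idx_word xs @ idx_word ys" by (simp add: idx_word_def)

definition hdY :: "hword \<Rightarrow> bool" where "hdY w \<longleftrightarrow> w = [] \<or> (\<exists>u. w = Y # u)"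

lemma hdY_idx: "hdY (idx_word ks)"
  by (cases ks) (auto simp: hdY_def ek_def)

lemma rep_X_eq: "hdY u \<Longrightarrow> hdY v \<Longrightarrow> replicate a X @ u = replicate b X @ v \<Longrightarrow> a = b \<and> u = v"
proof (induction a arbitrary: b)
  case 0
  then show ?case by (cases b) (auto simp: hdY_def)
next
  case (Suc a)
  then show ?case by (cases b) (auto simp: hdY_def)
qed

lemma idx_word_inj:
  "\<forall>x\<in>set ks. 0 < x \<Longrightarrow> \<forall>x\<in>set ks'. 0 < x \<Longrightarrow> idx_word ks = idx_word ks' \<Longrightarrow> ks = ks'"
proof (induction ks arbitrary: ks')
  case Nil
  then show ?case by (cases ks') (auto simp: ek_def)
next
  case (Cons k ks)
  then obtain k' ks'' where ks': "ks' = k' # ks''" by (cases ks') (auto simp: ek_def)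
  have "replicate (k-1) X @ idx_word ks = replicate (k'-1) X @ idx_word ks''"
    using Cons.prems ks' by (simp add: ek_def)
  from rep_X_eq[OF hdY_idx hdY_idx this] have "k - 1 = k' - 1" "idx_word ks = idx_word ks''" by auto
  moreover have "k = k'" using calculation(1) Cons.prems ks' by auto
  moreover have "ks = ks''"
    using Cons.IH[of ks''] Cons.prems ks' calculation(2) by simp
  ultimately show ?case using ks' by simp
qed

lemma idx_word_exists: "hdY w \<Longrightarrow> \<exists>ks. (\<forall>x\<in>set ks. 0 < x) \<and> idx_word ks = w"
proof (induction "length w" arbitrary: w rule: less_induct)
  case less
  show ?case
  proof (cases w)
    case Nil
    then show ?thesis by (intro exI[of _ "[]"]) simp
  next
    case (Cons l u)
    then have w: "w = Y # u" using less.prems by (auto simp: hdY_def)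
    define P where "P = (\<lambda>x. x = X)"
    define j where "j = length (takeWhile P u)"
    define rest where "rest = dropWhile P u"
    have tw: "takeWhile P u = replicate j X"
      unfolding j_def by (rule replicate_length_same[symmetric]) (auto simp: P_def dest: set_takeWhileD)
    have u: "u = replicate j X @ rest" using takeWhile_dropWhile_id[of P u] tw rest_def by simp
    have "hdY rest"
    proof (cases rest)
      case (Cons a r)
      then have "\<not> P a" using hd_dropWhile[of P u] rest_def by auto
      then have "a = Y" unfolding P_def by (cases a) auto
      then show ?thesis using Cons by (simp add: hdY_def)
    qed (simp add: hdY_def)
    moreover have "length rest < length w" using w u by simp
    ultimately obtain ks where ks: "\<forall>x\<in>set ks. 0 < x" "idx_word ks = rest" using less.hyps by blast
    show ?thesis
      by (intro exI[of _ "Suc j # ks"]) (use ks w u in \<open>auto simp: ek_def\<close>)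
  qed
qed

lemma widx_eq: "\<forall>x\<in>set ks. 0 < x \<Longrightarrow> widx (idx_word ks) = ks"
  unfolding widx_def by (rule the_equality) (auto intro: idx_word_inj)

lemma widx_prop: assumes "hdY w" shows "(\<forall>x\<in>set (widx w). 0 < x) \<and> idx_word (widx w) = w"
proof -
  obtain ks where "\<forall>x\<in>set ks. 0 < x" "idx_word ks = w" using idx_word_exists[OF assms] by blast
  then show ?thesis using widx_eq by metis
qed

fun gd :: "hword \<Rightarrow> bool" where
  "gd [] = True"
| "gd (X # w) = gd w"
| "gd (Y # X # w) = gd w"
| "gd [Y] = False"
| "gd (Y # Y # w) = False"

lemma gd_concat: "\<forall>u\<in>set us. u = [X] \<or> u = [Y, X] \<Longrightarrow> gd (concat us)"
  by (induction us) auto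

lemma gd_rep: "gd (replicate n X @ w) = gd w"
  by (induction n) auto

lemma gd_idx: "\<forall>x\<in>set ks. 0 < x \<Longrightarrow> gd (idx_word ks) \<Longrightarrow> \<forall>x\<in>set ks. 2 \<le> x"
proof (induction ks)
  case Nil
  then show ?case by simp
next
  case (Cons k ks)
  show ?case
  proof (cases "k = 1")
    case True
    then have "gd (Y # idx_word ks)" using Cons.prems by (simp add: ek_def)
    moreover have "hdY (idx_word ks)" by (rule hdY_idx)
    ultimately show ?thesis by (auto simp: hdY_def)
  next
    case False
    then have k: "k \<ge> 2" using Cons.prems by auto
    then have "ek k = Y # X # replicate (k - 2) X"
    proof -
      have "k - 1 = Suc (k - 2)" using k by arith
      then show ?thesis by (simp add: ek_def)
    qed
    then have "gd (idx_word ks)" using Cons.prems by (simp add: gd_rep)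
    then show ?thesis using Cons k by auto
  qed
qed



definition T :: "(hword \<Rightarrow> rat) \<Rightarrow> helem \<Rightarrow> rat" where
  "T G f = (\<Sum>w\<in>supp f. f w * G w)"

lemma T_superset: "finite S \<Longrightarrow> supp f \<subseteq> S \<Longrightarrow> T G f = (\<Sum>w\<in>S. f w * G w)"
  unfolding T_def by (rule sum.mono_neutral_left) (auto simp: supp_def)

lemma supp_delta: "supp (delta w) = {w}" by (auto simp: supp_def delta_def)

lemma T_delta: "T G (delta w) = G w" unfolding T_def supp_delta by (simp add: delta_def)

lemma rmul_app: "rmul f u (v @ u) = f v" by (auto simp: rmul_def)

lemma supp_rmul: "supp (rmul f u) = (\<lambda>v. v @ u) ` supp f"
proof (intro equalityI subsetI)
  fix w assume "w \<in> supp (rmul f u)"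
  then have ne: "rmul f u w \<noteq> 0" by (simp add: supp_def)
  then obtain v where "w = v @ u" by (auto simp: rmul_def split: if_splits)
  then show "w \<in> (\<lambda>v. v @ u) ` supp f" using ne by (auto simp: rmul_app supp_def)
next
  fix w assume "w \<in> (\<lambda>v. v @ u) ` supp f"
  then show "w \<in> supp (rmul f u)" by (auto simp: rmul_app supp_def)
qed

lemma T_rmul: "finite (supp f) \<Longrightarrow> T G (rmul f u) = T (\<lambda>v. G (v @ u)) f"
  unfolding T_def supp_rmul
  by (subst sum.reindex) (auto simp: inj_on_def rmul_app)

lemma supp_add3: "supp (\<lambda>w. f w + g w + h w) \<subseteq> supp f \<union> supp g \<union> supp h"
  by (auto simp: supp_def)

lemma T_add3:
  assumes "finite (supp f)" "finite (supp g)" "finite (supp h)"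
  shows "T G (\<lambda>w. f w + g w + h w) = T G f + T G g + T G h"
proof -
  let ?S = "supp f \<union> supp g \<union> supp h"
  have "T G (\<lambda>w. f w + g w + h w) = (\<Sum>w\<in>?S. (f w + g w + h w) * G w)"
    by (rule T_superset) (use assms supp_add3 in auto)
  also have "\<dots> = (\<Sum>w\<in>?S. f w * G w) + (\<Sum>w\<in>?S. g w * G w) + (\<Sum>w\<in>?S. h w * G w)"
    by (simp add: sum.distrib distrib_right)
  also have "\<dots> = T G f + T G g + T G h"
  proof -
    have fS: "finite ?S" using assms by simp
    have "supp f \<subseteq> ?S" "supp g \<subseteq> ?S" "supp h \<subseteq> ?S" by auto
    then show ?thesis using T_superset[OF fS, of f G] T_superset[OF fS, of g G] T_superset[OF fS, of h G] by simp
  qed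
  finally show ?thesis .
qed

lemma finite_supp_hrev: "finite (supp (hrev a b))"
proof (induction a b rule: hrev.induct)
  case (3 k1 a k2 b)
  have "supp (hrev (k1 # a) (k2 # b)) \<subseteq> supp (rmul (hrev a (k2 # b)) (ek k1)) \<union> supp (rmul (hrev (k1 # a) b) (ek k2))
     \<union> supp (rmul (hrev a b) (ek (k1 + k2)))"
    by (simp only: hrev.simps supp_add3)
  then show ?case using 3 by (auto simp: supp_rmul intro: finite_subset)
qed (auto simp: supp_delta)

lemma T_hrev: "T G (hrev a b) = sum_list (map (\<lambda>c. G (idx_word (rev c))) (hl a b))"
proof (induction a b arbitrary: G rule: hrev.induct)
  case (1 b)
  then show ?case by (simp add: T_delta)
next
  case (2 k1 a)
  then show ?case by (simp add: T_delta)
next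
  case (3 k1 a k2 b)
  have "T G (hrev (k1 # a) (k2 # b)) = T G (rmul (hrev a (k2 # b)) (ek k1)) + T G (rmul (hrev (k1 # a) b) (ek k2))
      + T G (rmul (hrev a b) (ek (k1 + k2)))"
    unfolding hrev.simps by (rule T_add3) (simp_all add: supp_rmul finite_supp_hrev)
  also have "\<dots> = T (\<lambda>v. G (v @ ek k1)) (hrev a (k2 # b)) + T (\<lambda>v. G (v @ ek k2)) (hrev (k1 # a) b)
      + T (\<lambda>v. G (v @ ek (k1 + k2))) (hrev a b)"
    by (simp add: T_rmul finite_supp_hrev)
  also have "\<dots> = sum_list (map (\<lambda>c. G (idx_word (rev c) @ ek k1)) (hl a (k2 # b)))
      + sum_list (map (\<lambda>c. G (idx_word (rev c) @ ek k2)) (hl (k1 # a) b))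
      + sum_list (map (\<lambda>c. G (idx_word (rev c) @ ek (k1 + k2))) (hl a b))"
    by (simp only: 3)
  finally show ?case by (simp add: o_def)
qed

lemma hl_pos: "\<forall>x\<in>set a. 0 < x \<Longrightarrow> \<forall>x\<in>set b. 0 < x \<Longrightarrow> \<forall>c\<in>set (hl a b). \<forall>x\<in>set c. 0 < (x::nat)"
proof (induction a b rule: hl.induct)
  case (1 b)
  then show ?case by simp
next
  case (2 k1 a)
  then show ?case by simp
next
  case (3 k1 a k2 b)
  have p: "\<forall>x\<in>set a. 0 < x" "\<forall>x\<in>set b. 0 < x" "0 < k1" "0 < k2" using "3.prems" by auto
  have h1: "\<forall>c\<in>set (hl a (k2 # b)). \<forall>x\<in>set c. 0 < x" using "3.IH"(1) "3.prems" p by blast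
  have h2: "\<forall>c\<in>set (hl (k1 # a) b). \<forall>x\<in>set c. 0 < x" using "3.IH"(2) "3.prems" p by blast
  have h3: "\<forall>c\<in>set (hl a b). \<forall>x\<in>set c. 0 < x" using "3.IH"(3) p by blast
  show ?case unfolding hl.simps set_append set_map using h1 h2 h3 p by auto
qed

lemma zetaD_nil: "zetaD_N [] N = 1" by (simp add: zetaD_D)

lemma widx_nil: "widx [] = []" using widx_eq[of "[]"] by simp

lemma Zword_eq: "Zword w N = zetaD_N (widx w) N"
  by (cases "w = []") (simp_all add: Zword_def zetaD_def widx_nil zetaD_nil)

theorem mainTheorem10:
  assumes "w1 \<in> H0" and "w2 \<in> H2" and "(N::nat) \<ge> 1"
  shows "ZD (harm w1 w2) N = ZD w1 N * ZD w2 N"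
proof -
  let ?Z = "\<lambda>w. Zword w N"
  let ?U = "supp w1" and ?V = "supp w2"
  have fU: "finite ?U" using assms(1) by (simp add: H0_def Hset_def)
  have fV: "finite ?V" using assms(2) by (simp add: H2_def Hset_def)
  have hU: "hdY u" if "u \<in> ?U" for u
    using assms(1) that by (auto simp: H0_def hdY_def)
  have hV: "hdY v \<and> gd v" if "v \<in> ?V" for v
  proof -
    from assms(2) that have "v = [] \<or> (\<exists>us. (\<forall>u \<in> set us. u = [X] \<or> u = [Y, X]) \<and> v = [Y, X] @ concat us)"
      by (auto simp: H2_def)
    then show ?thesis
    proof
      assume "\<exists>us. (\<forall>u \<in> set us. u = [X] \<or> u = [Y, X]) \<and> v = [Y, X] @ concat us"
      then obtain us where "\<forall>u \<in> set us. u = [X] \<or> u = [Y, X]" "v = [Y, X] @ concat us" by blast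
      then show ?thesis using gd_concat by (simp add: hdY_def)
    qed (simp add: hdY_def)
  qed
  have pV: "\<forall>x\<in>set (widx v). 2 \<le> x" if "v \<in> ?V" for v
    using widx_prop[of v] hV[OF that] gd_idx by metis
  define H where "H u v = hrev (rev (widx u)) (rev (widx v))" for u v
  have TH: "T ?Z (H u v) = ?Z u * ?Z v" if u: "u \<in> ?U" and v: "v \<in> ?V" for u v
  proof -
    let ?a = "rev (widx u)" and ?b = "rev (widx v)"
    have pa: "\<forall>x\<in>set ?a. 0 < x" using widx_prop[OF hU[OF u]] by simp
    have pb: "\<forall>x\<in>set ?b. 0 < x" using widx_prop[of v] hV[OF v] by simp
    have b2: "\<forall>x\<in>set ?b. 2 \<le> x" using pV[OF v] by simp
    have "T ?Z (H u v) = sum_list (map (\<lambda>c. ?Z (idx_word (rev c))) (hl ?a ?b))"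
      unfolding H_def by (rule T_hrev)
    also have "\<dots> = sum_list (map (\<lambda>c. D N c N) (hl ?a ?b))"
    proof (rule arg_cong[where f=sum_list], rule map_cong[OF refl])
      fix c assume "c \<in> set (hl ?a ?b)"
      then have "\<forall>x\<in>set (rev c). 0 < x" using hl_pos[OF pa pb] by simp
      then show "?Z (idx_word (rev c)) = D N c N"
        by (simp add: Zword_eq widx_eq zetaD_D)
    qed
    also have "\<dots> = D N ?a N * D N ?b N" by (rule core[OF b2])
    also have "\<dots> = ?Z u * ?Z v" by (simp add: Zword_eq zetaD_D)
    finally show ?thesis .
  qed
  define S where "S = (\<Union>u\<in>?U. \<Union>v\<in>?V. supp (H u v))"
  have fS: "finite S" unfolding S_def H_def using fU fV finite_supp_hrev by auto
  have hsub: "supp (H u v) \<subseteq> S" if "u \<in> ?U" "v \<in> ?V" for u v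
    unfolding S_def using that by blast
  have harm_eq: "harm w1 w2 = (\<lambda>w. \<Sum>u\<in>?U. \<Sum>v\<in>?V. w1 u * w2 v * H u v w)"
    by (simp add: harm_def H_def)
  have suppH: "supp (harm w1 w2) \<subseteq> S"
  proof
    fix w assume w: "w \<in> supp (harm w1 w2)"
    show "w \<in> S"
    proof (rule ccontr)
      assume "w \<notin> S"
      then have "\<And>u v. u \<in> ?U \<Longrightarrow> v \<in> ?V \<Longrightarrow> H u v w = 0"
        unfolding S_def supp_def by blast
      then have "harm w1 w2 w = 0" unfolding harm_eq by simp
      then show False using w by (simp add: supp_def)
    qed
  qed
  have "ZD (harm w1 w2) N = T ?Z (harm w1 w2)" by (simp add: ZD_def T_def)
  also have "\<dots> = (\<Sum>w\<in>S. harm w1 w2 w * ?Z w)" by (rule T_superset[OF fS suppH])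
  also have "\<dots> = (\<Sum>w\<in>S. \<Sum>u\<in>?U. \<Sum>v\<in>?V. w1 u * w2 v * (H u v w * ?Z w))"
    unfolding harm_eq by (simp add: sum_distrib_right mult.assoc)
  also have "\<dots> = (\<Sum>u\<in>?U. \<Sum>w\<in>S. \<Sum>v\<in>?V. w1 u * w2 v * (H u v w * ?Z w))"
    by (rule sum.swap)
  also have "\<dots> = (\<Sum>u\<in>?U. \<Sum>v\<in>?V. \<Sum>w\<in>S. w1 u * w2 v * (H u v w * ?Z w))"
    by (rule sum.cong[OF refl], rule sum.swap)
  also have "\<dots> = (\<Sum>u\<in>?U. \<Sum>v\<in>?V. w1 u * w2 v * (\<Sum>w\<in>S. H u v w * ?Z w))"
    by (simp add: sum_distrib_left)
  also have "\<dots> = (\<Sum>u\<in>?U. \<Sum>v\<in>?V. w1 u * w2 v * (?Z u * ?Z v))"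
  proof (rule sum.cong[OF refl], rule sum.cong[OF refl])
    fix u v assume "u \<in> ?U" "v \<in> ?V"
    then show "w1 u * w2 v * (\<Sum>w\<in>S. H u v w * ?Z w) = w1 u * w2 v * (?Z u * ?Z v)"
      using T_superset[OF fS hsub, of u v ?Z] TH by simp
  qed
  also have "\<dots> = (\<Sum>u\<in>?U. w1 u * ?Z u) * (\<Sum>v\<in>?V. w2 v * ?Z v)"
    by (simp add: sum_product algebra_simps)
  also have "\<dots> = ZD w1 N * ZD w2 N" by (simp add: ZD_def)
  finally show ?thesis .
qed


end
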